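(* Let $\sigma\colon O\to O'$ be an isomorphism of finite $Act$-labelled posets and let $O\rhd c_1$, $O\rhd c_2$ be P-markings. If $O\rhd c_1\sim_C O\rhd c_2$ then $O'\rhd c_1\sigma\sim_C O'\rhd c_2\sigma$.
   Context: Fix a set $Act$ of action labels, an infinite set $\mathcal{E}$ of event names and a net $N=(S,T,F,l)$ (disjoint places $S$ and transitions $T$, $F\subseteq(S\times T)\cup(T\times S)$, $l\colon T\to Act$, ${}^\bullet t=\{s:(s,t)\in F\}$, $t^\bullet=\{s:(t,s)\in F\}$ nonempty). Posets are finite $Act$-labelled posets $O=(X_O,\preccurlyeq_O,l_O)$, $X_O\subseteq\mathcal{E}$; $|O|=\{(x,l_O(x))\}$, $x_a=(x,a)$. Morphisms preserve order and labels ($\sigma(x_a)=\sigma(x)_a$); isomorphisms are bijective morphisms with morphism inverse. $\max_O K$: maximal elements of $K\subseteq|O|$; $K$ down-closed if $y\in K$, $x\preccurlyeq_O y$ imply $x\in K$. Causal markings: finite sets $c$ of pairs $K\vdash s$ ($s\in S$, $K$ finite $\subseteq\mathcal{E}\times Act$); $\mathcal{K}(c)$ union of cause sets, $|c|$ set of places, $K\vdash m=\{K\vdash s:s\in m\}$, $c\sigma=\{\sigma(K)\vdash s\}$. P-marking $O\rhd c$: cause sets are down-closed subsets of $|O|$. $\delta(O,K,e_a)$: $O$ plus event $e\notin X_O$ labelled $a$ above all of $K$, reflexive-transitively closed. Concrete causal case graph: $O\rhd c\cup c'\xrightarrow{K\vdash e_a}\delta(O,K,e_a)\rhd(\mathcal{K}(c)\cup\{e_a\}\vdash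 t^\bullet)\cup c'$ whenever $t\in T$, $O\rhd c\cup c'$ a P-marking, $|c|={}^\bullet t$, $a=l(t)$, $e\in\mathcal{E}\setminus X_O$, $K=\max_O\mathcal{K}(c)$. A concrete causal bisimulation is a family $\{R_O\}$ indexed by posets of relations on P-markings with: $(O_1\rhd c_1,O_2\rhd c_2)\in R_O$ implies $O_1=O_2=O$; if $(O\rhd c_1,O\rhd c_2)\in R_O$ and $O\rhd c_1\xrightarrow{K\vdash e_a}O'\rhd c_1'$ then $O\rhd c_2\xrightarrow{K\vdash e_a}O'\rhd c_2'$ with $(O'\rhd c_1',O'\rhd c_2')\in R_{O'}$, and vice versa. $\sim_C$ is the greatest one. *)

theory Defs
  imports Main
begin

text \<open>A net N = (S,T,F,l). The flow relation F is split into its two parts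
  F \<inter> (S \<times> T) and F \<inter> (T \<times> S), since places and transitions live in different types.\<close>

record ('s, 't, 'a) net =
  places :: "'s set"
  transs :: "'t set"
  flow_st :: "('s \<times> 't) set"
  flow_ts :: "('t \<times> 's) set"
  tlab   :: "'t \<Rightarrow> 'a"

definition preset :: "('s, 't, 'a) net \<Rightarrow> 't \<Rightarrow> 's set" where
  "preset N t = {s. (s, t) \<in> flow_st N}"

definition postset :: "('s, 't, 'a) net \<Rightarrow> 't \<Rightarrow> 's set" where
  "postset N t = {s. (t, s) \<in> flow_ts N}"

definition wf_net :: "('s, 't, 'a) net \<Rightarrow> bool" where
  "wf_net N \<longleftrightarrow> flow_st N \<subseteq> places N \<times> transs N \<and> flow_ts N \<subseteq> transs N \<times> places N
     \<and> (\<forall>t \<in> transs N. postset N t \<noteq> {})"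

text \<open>A poset P = (X_O, \<preccurlyeq>_O, l_O): the labelling is a partial map whose domain is X_O,
  the order is a relation on X_O.\<close>

record ('e, 'a) poset =
  ord :: "('e \<times> 'e) set"
  lab :: "'e \<rightharpoonup> 'a"

definition carrier :: "('e, 'a) poset \<Rightarrow> 'e set" where
  "carrier P = dom (lab P)"

definition wf_poset :: "('e, 'a) poset \<Rightarrow> bool" where
  "wf_poset P \<longleftrightarrow> finite (carrier P) \<and> ord P \<subseteq> carrier P \<times> carrier P
     \<and> (\<forall>x \<in> carrier P. (x, x) \<in> ord P)
     \<and> trans (ord P) \<and> antisym (ord P)"

definition elems :: "('e, 'a) poset \<Rightarrow> ('e \<times> 'a) set" where
  "elems P = {(x, a). lab P x = Some a}"

definition morph :: "('e, 'a) poset \<Rightarrow> ('e, 'a) poset \<Rightarrow> ('e \<Rightarrow> 'e) \<Rightarrow> bool" where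
  "morph P Q \<sigma> \<longleftrightarrow> (\<forall>x \<in> carrier P. \<sigma> x \<in> carrier Q \<and> lab Q (\<sigma> x) = lab P x)
     \<and> (\<forall>x y. (x, y) \<in> ord P \<longrightarrow> (\<sigma> x, \<sigma> y) \<in> ord Q)"

definition iso :: "('e, 'a) poset \<Rightarrow> ('e, 'a) poset \<Rightarrow> ('e \<Rightarrow> 'e) \<Rightarrow> bool" where
  "iso P Q \<sigma> \<longleftrightarrow> morph P Q \<sigma> \<and> bij_betw \<sigma> (carrier P) (carrier Q)
     \<and> morph Q P (inv_into (carrier P) \<sigma>)"

definition down_closed :: "('e, 'a) poset \<Rightarrow> ('e \<times> 'a) set \<Rightarrow> bool" where
  "down_closed P K \<longleftrightarrow> K \<subseteq> elems P
     \<and> (\<forall>y \<in> K. \<forall>x \<in> elems P. (fst x, fst y) \<in> ord P \<longrightarrow> x \<in> K)"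

definition maxO :: "('e, 'a) poset \<Rightarrow> ('e \<times> 'a) set \<Rightarrow> ('e \<times> 'a) set" where
  "maxO P K = {y \<in> K. \<not> (\<exists>z \<in> K. (fst y, fst z) \<in> ord P \<and> fst y \<noteq> fst z)}"

definition delta :: "('e, 'a) poset \<Rightarrow> ('e \<times> 'a) set \<Rightarrow> 'e \<Rightarrow> 'a \<Rightarrow> ('e, 'a) poset" where
  "delta P K e a =
     \<lparr> ord = Id_on (carrier P \<union> {e}) \<union> (ord P \<union> {(fst k, e) | k. k \<in> K})\<^sup>+,
       lab = (lab P)(e \<mapsto> a) \<rparr>"

type_synonym ('e, 'a, 's) cmarking = "(('e \<times> 'a) set \<times> 's) set"

definition causes :: "('e, 'a, 's) cmarking \<Rightarrow> ('e \<times> 'a) set" where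
  "causes c = \<Union> (fst ` c)"

definition places_of :: "('e, 'a, 's) cmarking \<Rightarrow> 's set" where
  "places_of c = snd ` c"

definition is_cmarking :: "('e, 'a, 's) cmarking \<Rightarrow> bool" where
  "is_cmarking c \<longleftrightarrow> finite c \<and> (\<forall>(K, s) \<in> c. finite K)"

definition cause_all :: "('e \<times> 'a) set \<Rightarrow> 's set \<Rightarrow> ('e, 'a, 's) cmarking" where
  "cause_all K m = {(K, s) | s. s \<in> m}"

definition rename_set :: "('e \<Rightarrow> 'e) \<Rightarrow> ('e \<times> 'a) set \<Rightarrow> ('e \<times> 'a) set" where
  "rename_set \<sigma> K = {(\<sigma> x, a) | x a. (x, a) \<in> K}"

definition rename :: "('e, 'a, 's) cmarking \<Rightarrow> ('e \<Rightarrow> 'e) \<Rightarrow> ('e, 'a, 's) cmarking" where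
  "rename c \<sigma> = {(rename_set \<sigma> K, s) | K s. (K, s) \<in> c}"

definition pmarking :: "('s, 't, 'a) net \<Rightarrow> ('e, 'a) poset \<Rightarrow> ('e, 'a, 's) cmarking \<Rightarrow> bool" where
  "pmarking N P c \<longleftrightarrow> wf_poset P \<and> is_cmarking c \<and> places_of c \<subseteq> places N
     \<and> (\<forall>(K, s) \<in> c. down_closed P K)"

definition cstep :: "('s, 't, 'a) net \<Rightarrow> ('e, 'a) poset \<Rightarrow> ('e, 'a, 's) cmarking
    \<Rightarrow> ('e \<times> 'a) set \<Rightarrow> 'e \<Rightarrow> 'a \<Rightarrow> ('e, 'a) poset \<Rightarrow> ('e, 'a, 's) cmarking \<Rightarrow> bool" where
  "cstep N P c K e a Q c'' \<longleftrightarrow>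
     (\<exists>t c0 c'. t \<in> transs N \<and> c = c0 \<union> c' \<and> pmarking N P (c0 \<union> c')
        \<and> places_of c0 = preset N t \<and> a = tlab N t \<and> e \<notin> carrier P
        \<and> K = maxO P (causes c0) \<and> Q = delta P K e a
        \<and> c'' = cause_all (causes c0 \<union> {(e, a)}) (postset N t) \<union> c')"

definition ccbisim :: "('s, 't, 'a) net
    \<Rightarrow> (('e, 'a) poset \<Rightarrow> (('e, 'a, 's) cmarking \<times> ('e, 'a, 's) cmarking) set) \<Rightarrow> bool" where
  "ccbisim N R \<longleftrightarrow>
     (\<forall>P c1 c2. (c1, c2) \<in> R P \<longrightarrow> pmarking N P c1 \<and> pmarking N P c2)
   \<and> (\<forall>P c1 c2 K e a Q c1'. (c1, c2) \<in> R P \<and> cstep N P c1 K e a Q c1' \<longrightarrow>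
        (\<exists>c2'. cstep N P c2 K e a Q c2' \<and> (c1', c2') \<in> R Q))
   \<and> (\<forall>P c1 c2 K e a Q c2'. (c1, c2) \<in> R P \<and> cstep N P c2 K e a Q c2' \<longrightarrow>
        (\<exists>c1'. cstep N P c1 K e a Q c1' \<and> (c1', c2') \<in> R Q))"

definition ccbisimilar :: "('s, 't, 'a) net \<Rightarrow> ('e, 'a) poset
    \<Rightarrow> ('e, 'a, 's) cmarking \<Rightarrow> ('e, 'a, 's) cmarking \<Rightarrow> bool" where
  "ccbisimilar N P c1 c2 \<longleftrightarrow> (\<exists>R. ccbisim N R \<and> (c1, c2) \<in> R P)"

end

theory Submission
  imports Defs
begin


lemma rename_set_cong: "(\<And>x b. (x,b) \<in> K \<Longrightarrow> f x = g x) \<Longrightarrow> rename_set f K = rename_set g K"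
  unfolding rename_set_def by (auto; metis)

lemma rename_set_comp: "rename_set g (rename_set f K) = rename_set (g \<circ> f) K"
  unfolding rename_set_def by auto

lemma rename_set_id: "rename_set (\<lambda>x. x) K = K"
  unfolding rename_set_def by auto

lemma rename_cong: "(\<And>x b. (x,b) \<in> causes c \<Longrightarrow> f x = g x) \<Longrightarrow> rename c f = rename c g"
proof -
  assume h: "\<And>x b. (x,b) \<in> causes c \<Longrightarrow> f x = g x"
  have "\<And>K s. (K,s) \<in> c \<Longrightarrow> rename_set f K = rename_set g K"
    by (rule rename_set_cong, rule h, force simp: causes_def)
  then show ?thesis unfolding rename_def by (auto; metis)
qed

lemma rename_comp: "rename (rename c f) g = rename c (g \<circ> f)"
  unfolding rename_def by (auto simp: rename_set_comp[symmetric]; blast)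

lemma rename_id: "rename c (\<lambda>x. x) = c"
  unfolding rename_def by (auto simp: rename_set_id)

lemma rename_Un: "rename (A \<union> B) f = rename A f \<union> rename B f"
  unfolding rename_def by auto

lemma causes_rename: "causes (rename c f) = rename_set f (causes c)"
  unfolding rename_def causes_def rename_set_def
  apply (rule set_eqI)
  apply (rule iffI)
   apply force
  apply clarsimp
  subgoal for x a K s
    apply (rule_tac x="{(f x, a) |x a. (x, a) \<in> K}" in exI)
    apply force
    done
  done

lemma places_rename: "places_of (rename c f) = places_of c"
  unfolding rename_def places_of_def by force

lemma rename_cause_all: "rename (cause_all X m) f = cause_all (rename_set f X) m"
  unfolding rename_def cause_all_def by auto

lemma causes_cause_all: "causes (cause_all X m) \<subseteq> X"
  unfolding causes_def cause_all_def by auto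

lemma causes_Un: "causes (A \<union> B) = causes A \<union> causes B"
  unfolding causes_def by auto



definition isoc :: "('e, 'a) poset \<Rightarrow> ('e, 'a) poset \<Rightarrow> ('e \<Rightarrow> 'e) \<Rightarrow> bool" where
 "isoc P Q \<sigma> \<longleftrightarrow> bij_betw \<sigma> (carrier P) (carrier Q) \<and> (\<forall>x\<in>carrier P. lab Q (\<sigma> x) = lab P x)
   \<and> (\<forall>x\<in>carrier P. \<forall>y\<in>carrier P. ((\<sigma> x, \<sigma> y) \<in> ord Q) = ((x,y) \<in> ord P))"

lemma wf_ordD: "wf_poset P \<Longrightarrow> (x,y) \<in> ord P \<Longrightarrow> x \<in> carrier P \<and> y \<in> carrier P"
  unfolding wf_poset_def by auto

lemma iso_isoc: assumes "wf_poset P" "wf_poset Q" "iso P Q \<sigma>" shows "isoc P Q \<sigma>"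
proof -
  have b: "bij_betw \<sigma> (carrier P) (carrier Q)" and m1: "morph P Q \<sigma>"
    and m2: "morph Q P (inv_into (carrier P) \<sigma>)" using assms(3) unfolding iso_def by auto
  have "\<forall>x\<in>carrier P. \<forall>y\<in>carrier P. ((\<sigma> x, \<sigma> y) \<in> ord Q) = ((x,y) \<in> ord P)"
  proof (intro ballI iffI)
    fix x y assume x: "x \<in> carrier P" and y: "y \<in> carrier P"
    { assume "(\<sigma> x, \<sigma> y) \<in> ord Q"
      then have "(inv_into (carrier P) \<sigma> (\<sigma> x), inv_into (carrier P) \<sigma> (\<sigma> y)) \<in> ord P"
        using m2 unfolding morph_def by blast
      then show "(x,y) \<in> ord P" using b x y by (simp add: bij_betw_def inv_into_f_f) }
    { assume "(x,y) \<in> ord P" then show "(\<sigma> x, \<sigma> y) \<in> ord Q" using m1 unfolding morph_def by blast }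
  qed
  then show ?thesis using b m1 unfolding isoc_def morph_def by blast
qed

lemma isoc_iso: assumes "wf_poset P" "wf_poset Q" "isoc P Q \<sigma>" shows "iso P Q \<sigma>"
proof -
  have b: "bij_betw \<sigma> (carrier P) (carrier Q)" and l: "\<forall>x\<in>carrier P. lab Q (\<sigma> x) = lab P x"
    and o: "\<forall>x\<in>carrier P. \<forall>y\<in>carrier P. ((\<sigma> x, \<sigma> y) \<in> ord Q) = ((x,y) \<in> ord P)"
    using assms(3) unfolding isoc_def by auto
  define \<iota> where "\<iota> = inv_into (carrier P) \<sigma>"
  have i1: "\<And>y. y \<in> carrier Q \<Longrightarrow> \<iota> y \<in> carrier P \<and> \<sigma> (\<iota> y) = y"
    using b unfolding \<iota>_def bij_betw_def by (auto intro: inv_into_into f_inv_into_f)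
  have "morph P Q \<sigma>" unfolding morph_def using b l o wf_ordD[OF assms(1)]
    by (auto simp: bij_betw_def)
  moreover have "morph Q P \<iota>" unfolding morph_def
  proof (intro conjI allI ballI impI)
    fix x assume "x \<in> carrier Q" then show "\<iota> x \<in> carrier P" using i1 by blast
    show "lab P (\<iota> x) = lab Q x" using i1 l \<open>x \<in> carrier Q\<close> by metis
  next
    fix x y assume "(x,y) \<in> ord Q"
    then have "x \<in> carrier Q" "y \<in> carrier Q" using wf_ordD[OF assms(2)] by auto
    then show "(\<iota> x, \<iota> y) \<in> ord P" using i1 o \<open>(x,y) \<in> ord Q\<close> by metis
  qed
  ultimately show ?thesis using b unfolding iso_def \<iota>_def by blast
qed

lemma isoc_inv: assumes "isoc P Q \<sigma>" shows "isoc Q P (inv_into (carrier P) \<sigma>)"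
proof -
  have b: "bij_betw \<sigma> (carrier P) (carrier Q)" and l: "\<forall>x\<in>carrier P. lab Q (\<sigma> x) = lab P x"
    and o: "\<forall>x\<in>carrier P. \<forall>y\<in>carrier P. ((\<sigma> x, \<sigma> y) \<in> ord Q) = ((x,y) \<in> ord P)"
    using assms unfolding isoc_def by auto
  define \<iota> where "\<iota> = inv_into (carrier P) \<sigma>"
  have i1: "\<And>y. y \<in> carrier Q \<Longrightarrow> \<iota> y \<in> carrier P \<and> \<sigma> (\<iota> y) = y"
    using b unfolding \<iota>_def bij_betw_def by (auto intro: inv_into_into f_inv_into_f)
  have "bij_betw \<iota> (carrier Q) (carrier P)" unfolding \<iota>_def by (rule bij_betw_inv_into[OF b])
  moreover have "\<forall>x\<in>carrier Q. lab P (\<iota> x) = lab Q x" using i1 l by metis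
  moreover have "\<forall>x\<in>carrier Q. \<forall>y\<in>carrier Q. ((\<iota> x, \<iota> y) \<in> ord P) = ((x,y) \<in> ord Q)"
    using i1 o by metis
  ultimately show ?thesis unfolding isoc_def \<iota>_def by blast
qed

lemma isoc_inj: "isoc P Q \<sigma> \<Longrightarrow> x \<in> carrier P \<Longrightarrow> y \<in> carrier P \<Longrightarrow> \<sigma> x = \<sigma> y \<Longrightarrow> x = y"
  unfolding isoc_def bij_betw_def inj_on_def by blast

lemma isoc_carrier: "isoc P Q \<sigma> \<Longrightarrow> x \<in> carrier P \<Longrightarrow> \<sigma> x \<in> carrier Q"
  unfolding isoc_def bij_betw_def by blast

lemma isoc_lab: "isoc P Q \<sigma> \<Longrightarrow> x \<in> carrier P \<Longrightarrow> lab Q (\<sigma> x) = lab P x"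
  unfolding isoc_def by blast

lemma isoc_ord: "isoc P Q \<sigma> \<Longrightarrow> x \<in> carrier P \<Longrightarrow> y \<in> carrier P \<Longrightarrow> ((\<sigma> x, \<sigma> y) \<in> ord Q) = ((x,y) \<in> ord P)"
  unfolding isoc_def by blast

lemma isoc_surj: "isoc P Q \<sigma> \<Longrightarrow> y \<in> carrier Q \<Longrightarrow> \<exists>x\<in>carrier P. y = \<sigma> x"
  unfolding isoc_def bij_betw_def by blast

lemma elems_iff: "(x,b) \<in> elems P \<longleftrightarrow> lab P x = Some b"
  unfolding elems_def by auto

lemma elems_carrier: "(x,b) \<in> elems P \<Longrightarrow> x \<in> carrier P"
  unfolding elems_def carrier_def by auto

lemma carrier_iff: "x \<in> carrier P \<longleftrightarrow> (\<exists>b. lab P x = Some b)"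
  unfolding carrier_def by auto

lemma isoc_elems: "isoc P Q \<sigma> \<Longrightarrow> (x,b) \<in> elems P \<Longrightarrow> (\<sigma> x, b) \<in> elems Q"
  by (metis elems_carrier elems_iff isoc_lab)

lemma isoc_inv_id: "isoc P Q \<sigma> \<Longrightarrow> x \<in> carrier P \<Longrightarrow> inv_into (carrier P) \<sigma> (\<sigma> x) = x"
  unfolding isoc_def bij_betw_def by (simp add: inv_into_f_f)

lemma isoc_inv_id2: "isoc P Q \<sigma> \<Longrightarrow> y \<in> carrier Q \<Longrightarrow> \<sigma> (inv_into (carrier P) \<sigma> y) = y"
  unfolding isoc_def bij_betw_def by (simp add: f_inv_into_f)



lemma rename_set_image: "rename_set f K = (\<lambda>(x,a). (f x, a)) ` K"
  unfolding rename_set_def by force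
lemma rename_image: "rename c f = (\<lambda>(K,s). (rename_set f K, s)) ` c"
  unfolding rename_def by force
lemma is_cmarking_rename: "is_cmarking c \<Longrightarrow> is_cmarking (rename c f)"
  unfolding is_cmarking_def rename_image rename_set_image by auto

lemma pmarking_transport:
  assumes "isoc P Q \<sigma>" "wf_poset Q" "pmarking N P c"
  shows "pmarking N Q (rename c \<sigma>)"
proof -
  have dc: "\<And>K. down_closed P K \<Longrightarrow> down_closed Q (rename_set \<sigma> K)"
  proof -
    fix K assume d: "down_closed P K"
    have sub: "K \<subseteq> elems P" using d unfolding down_closed_def by blast
    show "down_closed Q (rename_set \<sigma> K)" unfolding down_closed_def
    proof (intro conjI ballI impI)
      show "rename_set \<sigma> K \<subseteq> elems Q"
      proof
        fix p assume "p \<in> rename_set \<sigma> K"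
        then obtain x b where "p = (\<sigma> x, b)" "(x,b) \<in> K" unfolding rename_set_def by blast
        then show "p \<in> elems Q" using sub isoc_elems[OF assms(1), of x b] by auto
      qed
    next
      fix y z assume y: "y \<in> rename_set \<sigma> K" and z: "z \<in> elems Q" and o: "(fst z, fst y) \<in> ord Q"
      obtain x b where xb: "(x,b) \<in> K" "y = (\<sigma> x, b)" using y unfolding rename_set_def by blast
      obtain w b' where wb: "z = (w,b')" by (cases z)
      have wc: "w \<in> carrier Q" using z wb elems_carrier by simp
      obtain v where v: "v \<in> carrier P" "w = \<sigma> v" using isoc_surj[OF assms(1) wc] by blast
      have "(x,b) \<in> elems P" using xb sub by auto
      then have xc: "x \<in> carrier P" by (rule elems_carrier)
      have "(v, x) \<in> ord P" using isoc_ord[OF assms(1) v(1) xc] o v xb wb by simp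
      moreover have "(v,b') \<in> elems P"
        using z wb v isoc_lab[OF assms(1) v(1)] by (simp add: elems_iff)
      moreover have dd: "\<forall>y\<in>K. \<forall>x\<in>elems P. (fst x, fst y) \<in> ord P \<longrightarrow> x \<in> K"
        using d unfolding down_closed_def by blast
      ultimately have "(v,b') \<in> K" using dd[rule_format, OF xb(1), of "(v,b')"] by simp
      then show "z \<in> rename_set \<sigma> K" using wb v unfolding rename_set_def by auto
    qed
  qed
  have "is_cmarking (rename c \<sigma>)" using assms(3) is_cmarking_rename unfolding pmarking_def by blast
  moreover have "\<forall>(K, s)\<in>rename c \<sigma>. down_closed Q K"
  proof (rule ballI)
    fix p assume "p \<in> rename c \<sigma>"
    then obtain K0 s where p: "p = (rename_set \<sigma> K0, s)" "(K0, s) \<in> c" unfolding rename_def by blast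
    have "down_closed P K0" using assms(3) p(2) unfolding pmarking_def by blast
    then show "case p of (K, s) \<Rightarrow> down_closed Q K" using p(1) dc by simp
  qed
  ultimately show ?thesis using assms(2,3) unfolding pmarking_def by (simp add: places_rename)
qed

lemma mem_rename_set: "p \<in> rename_set f K \<longleftrightarrow> (\<exists>x b. p = (f x, b) \<and> (x,b) \<in> K)"
  unfolding rename_set_def by blast

lemma mem_maxO: "y \<in> maxO P X \<longleftrightarrow> y \<in> X \<and> (\<forall>z\<in>X. (fst y, fst z) \<in> ord P \<longrightarrow> fst y = fst z)"
  unfolding maxO_def by blast

lemma maxO_transport:
  assumes iso: "isoc P Q \<sigma>" and Xs: "X \<subseteq> elems P"
  shows "maxO Q (rename_set \<sigma> X) = rename_set \<sigma> (maxO P X)"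
proof -
  have c: "x \<in> carrier P" if "(x,b) \<in> X" for x b
  proof -
    have "(x,b) \<in> elems P" using Xs that by (rule subsetD)
    then show ?thesis by (rule elems_carrier)
  qed
  show ?thesis
  proof (rule set_eqI, rule iffI)
    fix y assume "y \<in> maxO Q (rename_set \<sigma> X)"
    then have y1: "y \<in> rename_set \<sigma> X" and n: "\<forall>z\<in>rename_set \<sigma> X. (fst y, fst z) \<in> ord Q \<longrightarrow> fst y = fst z"
      by (simp_all only: mem_maxO) blast+
    obtain x b where xb: "y = (\<sigma> x, b)" "(x,b) \<in> X" using y1[unfolded mem_rename_set] by blast
    have "\<forall>z\<in>X. (x, fst z) \<in> ord P \<longrightarrow> x = fst z"
    proof (intro ballI impI)
      fix z assume z: "z \<in> X" "(x, fst z) \<in> ord P"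
      obtain w b' where wb: "z = (w,b')" by (cases z)
      have wc: "w \<in> carrier P" using c z(1) wb by simp
      have "(\<sigma> x, \<sigma> w) \<in> ord Q" using isoc_ord[OF iso c[OF xb(2)] wc] z(2) wb by simp
      moreover have "(\<sigma> w, b') \<in> rename_set \<sigma> X" using z(1) wb unfolding mem_rename_set by blast
      ultimately have "\<sigma> x = \<sigma> w" using n xb(1) by fastforce
      then show "x = fst z" using isoc_inj[OF iso c[OF xb(2)] wc] wb by simp
    qed
    then have "(x,b) \<in> maxO P X" using xb(2) unfolding mem_maxO by simp
    then show "y \<in> rename_set \<sigma> (maxO P X)" using xb(1) unfolding mem_rename_set by blast
  next
    fix y assume "y \<in> rename_set \<sigma> (maxO P X)"
    then obtain x b where xb: "y = (\<sigma> x, b)" "(x,b) \<in> maxO P X" by (auto simp only: mem_rename_set)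
    have xX: "(x,b) \<in> X" and n: "\<forall>z\<in>X. (x, fst z) \<in> ord P \<longrightarrow> x = fst z"
      using xb(2) by (simp_all only: mem_maxO fst_conv) blast+
    have "\<forall>z\<in>rename_set \<sigma> X. (\<sigma> x, fst z) \<in> ord Q \<longrightarrow> \<sigma> x = fst z"
    proof (intro ballI impI)
      fix z assume z: "z \<in> rename_set \<sigma> X" "(\<sigma> x, fst z) \<in> ord Q"
      obtain w b' where wb: "z = (\<sigma> w, b')" "(w,b') \<in> X" using z(1)[unfolded mem_rename_set] by blast
      have wc: "w \<in> carrier P" using c wb(2) by simp
      have "(x, w) \<in> ord P" using isoc_ord[OF iso c[OF xX] wc] z(2) wb by simp
      then have "x = w" using n wb(2) by fastforce
      then show "\<sigma> x = fst z" using wb by simp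
    qed
    moreover have "y \<in> rename_set \<sigma> X" using xb(1) xX unfolding mem_rename_set by blast
    ultimately show "y \<in> maxO Q (rename_set \<sigma> X)" using xb(1) unfolding mem_maxO by simp
  qed
qed

lemma delta_ord:
  assumes "wf_poset P" "e \<notin> carrier P" "K \<subseteq> elems P"
  shows "ord (delta P K e a) = ord P \<union> {(e,e)} \<union> {(x,e) | x. \<exists>k\<in>K. (x, fst k) \<in> ord P}"
proof -
  let ?E = "ord P \<union> {(fst k, e) | k. k \<in> K}"
  let ?M = "ord P \<union> {(x,e) | x. \<exists>k\<in>K. (x, fst k) \<in> ord P}"
  have w: "\<forall>x \<in> carrier P. (x, x) \<in> ord P" "trans (ord P)" "ord P \<subseteq> carrier P \<times> carrier P"
    using assms(1) unfolding wf_poset_def by auto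
  have kc: "\<And>k. k \<in> K \<Longrightarrow> fst k \<in> carrier P" using assms(3) elems_carrier
    by (metis prod.collapse subsetD)
  have tM: "trans ?M"
  proof (rule transI)
    fix x y z assume xy: "(x,y) \<in> ?M" and yz: "(y,z) \<in> ?M"
    show "(x,z) \<in> ?M"
    proof (cases "(y,z) \<in> ord P")
      case True
      then have "y \<noteq> e" using w(3) assms(2) by auto
      then have "(x,y) \<in> ord P" using xy by auto
      then show ?thesis using True w(2) unfolding trans_def by blast
    next
      case False
      then obtain k where k: "z = e" "k \<in> K" "(y, fst k) \<in> ord P" using yz by auto
      then have "y \<noteq> e" using w(3) assms(2) by auto
      then have "(x,y) \<in> ord P" using xy by auto
      then have "(x, fst k) \<in> ord P" using k w(2) unfolding trans_def by blast
      then show ?thesis using k by blast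
    qed
  qed
  have "?E\<^sup>+ = ?M"
  proof
    have "?E \<subseteq> ?M" using w(1) kc by fastforce
    then have "?E\<^sup>+ \<subseteq> ?M\<^sup>+" by (rule trancl_mono_subset)
    then show "?E\<^sup>+ \<subseteq> ?M" using tM by (simp add: trancl_id)
  next
    show "?M \<subseteq> ?E\<^sup>+"
    proof
      fix p assume "p \<in> ?M"
      then show "p \<in> ?E\<^sup>+"
      proof
        assume "p \<in> ord P" then show ?thesis by (meson UnI1 r_into_trancl')
      next
        assume "p \<in> {(x,e) | x. \<exists>k\<in>K. (x, fst k) \<in> ord P}"
        then obtain x k where "p = (x,e)" "k \<in> K" "(x, fst k) \<in> ord P" by blast
        then have "(x, fst k) \<in> ?E" "(fst k, e) \<in> ?E" by blast+
        then have "(x, fst k) \<in> ?E\<^sup>+" "(fst k, e) \<in> ?E\<^sup>+" by (meson r_into_trancl')+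
        then show ?thesis using \<open>p = (x,e)\<close> by (meson trancl_trans)
      qed
    qed
  qed
  moreover have "Id_on (carrier P \<union> {e}) \<subseteq> ord P \<union> {(e,e)}" using w(1) by (auto simp: Id_on_def)
  ultimately show ?thesis unfolding delta_def by auto
qed

lemma carrier_delta: "carrier (delta P K e a) = carrier P \<union> {e}"
  unfolding delta_def carrier_def by auto

lemma lab_delta: "lab (delta P K e a) = (lab P)(e \<mapsto> a)"
  unfolding delta_def by auto

lemma wf_delta:
  assumes "wf_poset P" "e \<notin> carrier P" "K \<subseteq> elems P"
  shows "wf_poset (delta P K e a)"
proof -
  have w: "finite (carrier P)" "\<forall>x \<in> carrier P. (x, x) \<in> ord P" "trans (ord P)" "ord P \<subseteq> carrier P \<times> carrier P"
    "antisym (ord P)"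
    using assms(1) unfolding wf_poset_def by auto
  note d = delta_ord[OF assms]
  have "trans (ord (delta P K e a))" unfolding d
  proof (rule transI)
    fix x y z assume xy: "(x,y) \<in> ord P \<union> {(e,e)} \<union> {(x,e) | x. \<exists>k\<in>K. (x, fst k) \<in> ord P}"
      and yz: "(y,z) \<in> ord P \<union> {(e,e)} \<union> {(x,e) | x. \<exists>k\<in>K. (x, fst k) \<in> ord P}"
    show "(x,z) \<in> ord P \<union> {(e,e)} \<union> {(x,e) | x. \<exists>k\<in>K. (x, fst k) \<in> ord P}"
    proof (cases "y = e")
      case True
      then have "z = e" using yz w(4) assms(2) by auto
      then show ?thesis using xy True by auto
    next
      case False
      then have "(x,y) \<in> ord P" using xy by auto
      then show ?thesis using yz w(3) unfolding trans_def by blast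
    qed
  qed
  moreover have "antisym (ord (delta P K e a))" unfolding d
    using w(4,5) assms(2) unfolding antisym_def by blast
  ultimately show ?thesis unfolding wf_poset_def carrier_delta using w(1,2,4) unfolding d by auto
qed



lemma isoc_delta:
  assumes iso: "isoc P Q \<sigma>" and wP: "wf_poset P" and wQ: "wf_poset Q"
    and e: "e \<notin> carrier P" and e': "e' \<notin> carrier Q" and K: "K \<subseteq> elems P"
  shows "isoc (delta P K e a) (delta Q (rename_set \<sigma> K) e' a) (\<sigma>(e:=e'))"
proof -
  let ?s = "\<sigma>(e:=e')"
  have K': "rename_set \<sigma> K \<subseteq> elems Q" using K isoc_elems[OF iso] unfolding rename_set_def by blast
  note dP = delta_ord[OF wP e K, of a] and dQ = delta_ord[OF wQ e' K', of a]
  have sc: "\<And>x. x \<in> carrier P \<Longrightarrow> ?s x = \<sigma> x" using e by auto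
  have kc: "\<And>k. k \<in> K \<Longrightarrow> fst k \<in> carrier P" using K elems_carrier
    by (metis prod.collapse subsetD)
  have oP: "ord P \<subseteq> carrier P \<times> carrier P" "ord Q \<subseteq> carrier Q \<times> carrier Q"
    using wP wQ unfolding wf_poset_def by auto
  have bij: "bij_betw \<sigma> (carrier P) (carrier Q)" using iso unfolding isoc_def by blast
  have "bij_betw ?s (carrier P \<union> {e}) (carrier Q \<union> {e'})"
    unfolding bij_betw_def
  proof
    show "inj_on ?s (carrier P \<union> {e})"
      using bij e' sc unfolding inj_on_def bij_betw_def
      by (metis Un_iff fun_upd_same image_eqI singletonD)
    have "?s ` carrier P = \<sigma> ` carrier P" using sc by (auto simp: image_def)
    then show "?s ` (carrier P \<union> {e}) = carrier Q \<union> {e'}" using bij unfolding bij_betw_def by auto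
  qed
  moreover have "\<forall>x\<in>carrier P \<union> {e}. lab (delta Q (rename_set \<sigma> K) e' a) (?s x) = lab (delta P K e a) x"
    using isoc_lab[OF iso] isoc_carrier[OF iso] e e' by (auto simp: lab_delta)
  moreover have "\<forall>x\<in>carrier P \<union> {e}. \<forall>y\<in>carrier P \<union> {e}.
     ((?s x, ?s y) \<in> ord (delta Q (rename_set \<sigma> K) e' a)) = ((x,y) \<in> ord (delta P K e a))"
  proof (intro ballI)
    fix x y assume x: "x \<in> carrier P \<union> {e}" and y: "y \<in> carrier P \<union> {e}"
    show "((?s x, ?s y) \<in> ord (delta Q (rename_set \<sigma> K) e' a)) = ((x,y) \<in> ord (delta P K e a))"
    proof (cases "x = e")
      case xe: True
      show ?thesis
      proof (cases "y = e")
        case True then show ?thesis using xe dP dQ by simp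
      next
        case False
        then have yc: "y \<in> carrier P" using y by auto
        have "\<sigma> y \<in> carrier Q" using isoc_carrier[OF iso yc] .
        then have "\<sigma> y \<noteq> e'" using e' by auto
        then show ?thesis using xe dP dQ False oP e e' yc by auto
      qed
    next
      case xn: False
      then have xc: "x \<in> carrier P" using x by auto
      have sxc: "\<sigma> x \<in> carrier Q" using isoc_carrier[OF iso xc] .
      show ?thesis
      proof (cases "y = e")
        case ye: True
        have "(\<exists>k\<in>rename_set \<sigma> K. (\<sigma> x, fst k) \<in> ord Q) = (\<exists>k\<in>K. (x, fst k) \<in> ord P)"
        proof
          assume "\<exists>k\<in>rename_set \<sigma> K. (\<sigma> x, fst k) \<in> ord Q"
          then obtain w b where "(w,b) \<in> K" "(\<sigma> x, \<sigma> w) \<in> ord Q" unfolding rename_set_def by auto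
          moreover have "w \<in> carrier P" using kc \<open>(w,b) \<in> K\<close> by force
          ultimately show "\<exists>k\<in>K. (x, fst k) \<in> ord P" using isoc_ord[OF iso xc] by force
        next
          assume "\<exists>k\<in>K. (x, fst k) \<in> ord P"
          then obtain w b where "(w,b) \<in> K" "(x, w) \<in> ord P" by auto
          moreover have "w \<in> carrier P" using kc \<open>(w,b) \<in> K\<close> by force
          ultimately show "\<exists>k\<in>rename_set \<sigma> K. (\<sigma> x, fst k) \<in> ord Q"
            using isoc_ord[OF iso xc] unfolding rename_set_def by force
        qed
        moreover have "(\<sigma> x, e') \<notin> ord Q" "(x, e) \<notin> ord P" using oP e e' by auto
        moreover have "\<sigma> x \<noteq> e'" using sxc e' by auto
        ultimately show ?thesis using ye dP dQ sc[OF xc] xn by auto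
      next
        case False
        then have yc: "y \<in> carrier P" using y by auto
        have "\<sigma> y \<noteq> e'" using e' isoc_carrier[OF iso yc] by auto
        then show ?thesis using dP dQ sc[OF xc] sc[OF yc] False isoc_ord[OF iso xc yc] by auto
      qed
    qed
  qed
  ultimately show ?thesis unfolding isoc_def carrier_delta by blast
qed



lemma rename_set_Un: "rename_set f (A \<union> B) = rename_set f A \<union> rename_set f B"
  unfolding rename_set_def by auto

lemma rename_set_single: "rename_set f {(x,b)} = {(f x, b)}"
  unfolding rename_set_def by auto

lemma pmarking_causes: "pmarking N P c \<Longrightarrow> causes c \<subseteq> elems P"
  unfolding pmarking_def causes_def down_closed_def by fastforce

lemma maxO_sub: "maxO P X \<subseteq> X" unfolding maxO_def by auto

lemma elems_delta: "elems (delta P K e a) = {p \<in> elems P. fst p \<noteq> e} \<union> {(e,a)}"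
  unfolding elems_def lab_delta by (auto split: if_splits)

lemma step_transport:
  assumes iso: "isoc P Q \<sigma>" and wP: "wf_poset P" and wQ: "wf_poset Q"
    and pm: "pmarking N P c" and st: "cstep N P c K e a P'' c''" and e': "e' \<notin> carrier Q"
  shows "cstep N Q (rename c \<sigma>) (rename_set \<sigma> K) e' a (delta Q (rename_set \<sigma> K) e' a) (rename c'' (\<sigma>(e:=e')))
    \<and> isoc P'' (delta Q (rename_set \<sigma> K) e' a) (\<sigma>(e:=e'))
    \<and> wf_poset (delta Q (rename_set \<sigma> K) e' a)
    \<and> P'' = delta P K e a \<and> causes c'' \<subseteq> elems P'' \<and> K \<subseteq> elems P"
proof -
  obtain t c0 c' where t: "t \<in> transs N" and c: "c = c0 \<union> c'" and pm': "pmarking N P (c0 \<union> c')"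
    and pl: "places_of c0 = preset N t" and a: "a = tlab N t" and e: "e \<notin> carrier P"
    and K: "K = maxO P (causes c0)" and P'': "P'' = delta P K e a"
    and c'': "c'' = cause_all (causes c0 \<union> {(e, a)}) (postset N t) \<union> c'"
    using st unfolding cstep_def by blast
  have cc: "causes c \<subseteq> elems P" using pmarking_causes[OF pm] .
  have c0s: "causes c0 \<subseteq> elems P" and c's: "causes c' \<subseteq> elems P" using cc c causes_Un by auto
  have Ks: "K \<subseteq> elems P" using K maxO_sub c0s by blast
  let ?s = "\<sigma>(e:=e')"
  have eqs: "\<And>x b. (x,b) \<in> elems P \<Longrightarrow> ?s x = \<sigma> x" using e elems_carrier by fastforce
  have r1: "rename c \<sigma> = rename c0 \<sigma> \<union> rename c' \<sigma>" using c rename_Un by blast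
  have pmQ: "pmarking N Q (rename c0 \<sigma> \<union> rename c' \<sigma>)"
    using pmarking_transport[OF iso wQ pm] r1 by simp
  have mx: "rename_set \<sigma> K = maxO Q (causes (rename c0 \<sigma>))"
    using K maxO_transport[OF iso c0s] causes_rename by metis
  have rc': "rename c' ?s = rename c' \<sigma>" using c's eqs by (intro rename_cong) blast
  have rc0: "rename_set ?s (causes c0) = rename_set \<sigma> (causes c0)" using c0s eqs by (intro rename_set_cong) blast
  have "rename c'' ?s = cause_all (causes (rename c0 \<sigma>) \<union> {(e', a)}) (postset N t) \<union> rename c' \<sigma>"
    unfolding c'' rename_Un rename_cause_all rename_set_Un rename_set_single rc' rc0 causes_rename by simp
  then have cs: "cstep N Q (rename c \<sigma>) (rename_set \<sigma> K) e' a (delta Q (rename_set \<sigma> K) e' a) (rename c'' ?s)"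
    unfolding cstep_def using t r1 pmQ pl places_rename a e' mx by metis
  have K': "rename_set \<sigma> K \<subseteq> elems Q" using Ks isoc_elems[OF iso] unfolding rename_set_def by blast
  have "causes c'' \<subseteq> elems P''"
  proof -
    have "causes c'' \<subseteq> causes c0 \<union> {(e, a)} \<union> causes c'"
      unfolding c'' causes_Un using causes_cause_all by blast
    moreover have "elems P \<subseteq> {p \<in> elems P. fst p \<noteq> e}" using e elems_carrier by fastforce
    ultimately show ?thesis using c0s c's unfolding P'' elems_delta by blast
  qed
  then show ?thesis using cs isoc_delta[OF iso wP wQ e e' Ks] wf_delta[OF wQ e' K'] P'' Ks by blast
qed



lemma cb_pm: "ccbisimilar N P c1 c2 \<Longrightarrow> pmarking N P c1 \<and> pmarking N P c2"
  unfolding ccbisimilar_def ccbisim_def by blast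

lemma cb_step: "ccbisimilar N P c1 c2 \<Longrightarrow> cstep N P c1 K e a Q c1' \<Longrightarrow>
   \<exists>c2'. cstep N P c2 K e a Q c2' \<and> ccbisimilar N Q c1' c2'"
proof -
  assume a1: "ccbisimilar N P c1 c2" and a2: "cstep N P c1 K e a Q c1'"
  obtain R where R: "ccbisim N R" "(c1,c2) \<in> R P" using a1 unfolding ccbisimilar_def by blast
  then obtain c2' where "cstep N P c2 K e a Q c2'" "(c1', c2') \<in> R Q"
    using a2 unfolding ccbisim_def by blast
  then show ?thesis using R(1) unfolding ccbisimilar_def by blast
qed

lemma cb_sym: assumes "ccbisimilar N P c1 c2" shows "ccbisimilar N P c2 c1"
proof -
  obtain R where R: "ccbisim N R" "(c1,c2) \<in> R P" using assms unfolding ccbisimilar_def by blast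
  have "ccbisim N (\<lambda>P. (R P)\<inverse>)" using R(1) unfolding ccbisim_def by blast
  then show ?thesis using R(2) unfolding ccbisimilar_def by blast
qed

lemma cstep_fresh: "cstep N P c K e a Q c' \<Longrightarrow> e \<notin> carrier P"
  unfolding cstep_def by blast

definition Rt :: "('s, 't, 'a) net \<Rightarrow> ('e, 'a) poset \<Rightarrow> (('e, 'a, 's) cmarking \<times> ('e, 'a, 's) cmarking) set" where
  "Rt N Q0 = {(rename c1 \<rho>, rename c2 \<rho>) | c1 c2 \<rho> P0. wf_poset Q0 \<and> isoc P0 Q0 \<rho> \<and> ccbisimilar N P0 c1 c2}"

lemma Rt_intro: "wf_poset Q0 \<Longrightarrow> isoc P0 Q0 \<rho> \<Longrightarrow> ccbisimilar N P0 c1 c2 \<Longrightarrow>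
   (rename c1 \<rho>, rename c2 \<rho>) \<in> Rt N Q0"
  unfolding Rt_def by blast

lemma Rt_sym: "(x,y) \<in> Rt N Q0 \<Longrightarrow> (y,x) \<in> Rt N Q0"
  unfolding Rt_def using cb_sym by blast

lemma rename_back:
  assumes "\<And>x b. (x,b) \<in> causes c \<Longrightarrow> g (f x) = x"
  shows "rename (rename c f) g = c"
proof -
  have "rename c (g \<circ> f) = rename c (\<lambda>x. x)" using assms by (intro rename_cong) auto
  then show ?thesis by (simp add: rename_comp rename_id)
qed

lemma main_step:
  fixes \<rho> :: "'e \<Rightarrow> 'e" and P0 :: "('e, 'a) poset"
  assumes inf: "infinite (UNIV :: 'e set)" and wQ: "wf_poset Q0" and iso: "isoc P0 Q0 \<rho>"
    and cb: "ccbisimilar N P0 c1 c2"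
    and st: "cstep N Q0 (rename c1 \<rho>) K e a Q1 d"
  shows "\<exists>d2. cstep N Q0 (rename c2 \<rho>) K e a Q1 d2 \<and> (d, d2) \<in> Rt N Q1"
proof -
  have pm1: "pmarking N P0 c1" and pm2: "pmarking N P0 c2" using cb_pm[OF cb] by auto
  have wP: "wf_poset P0" using pm1 unfolding pmarking_def by blast
  have "finite (carrier P0)" using wP unfolding wf_poset_def by blast
  then obtain e0 where e0: "e0 \<notin> carrier P0" using ex_new_if_finite[OF inf] by blast
  have e: "e \<notin> carrier Q0" using cstep_fresh[OF st] .
  define \<iota> where "\<iota> = inv_into (carrier P0) \<rho>"
  have isoi: "isoc Q0 P0 \<iota>" unfolding \<iota>_def by (rule isoc_inv[OF iso])
  have pmQ: "pmarking N Q0 (rename c1 \<rho>)" by (rule pmarking_transport[OF iso wQ pm1])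
  note T1 = step_transport[OF isoi wQ wP pmQ st e0]
  have back1: "rename (rename c1 \<rho>) \<iota> = c1"
  proof (rule rename_back)
    fix x b assume "(x,b) \<in> causes c1"
    then have "(x,b) \<in> elems P0" using pmarking_causes[OF pm1] by (rule rev_subsetD)
    then have "x \<in> carrier P0" by (rule elems_carrier)
    then show "\<iota> (\<rho> x) = x" unfolding \<iota>_def by (rule isoc_inv_id[OF iso])
  qed
  define K1 where "K1 = rename_set \<iota> K"
  define P1 where "P1 = delta P0 K1 e0 a"
  define \<iota>' where "\<iota>' = \<iota>(e:=e0)"
  have st1: "cstep N P0 c1 K1 e0 a P1 (rename d \<iota>')" using T1 back1 unfolding K1_def P1_def \<iota>'_def by simp
  have iso1: "isoc Q1 P1 \<iota>'" and Q1: "Q1 = delta Q0 K e a" and cd: "causes d \<subseteq> elems Q1"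
    and KQ: "K \<subseteq> elems Q0"
    using T1 unfolding K1_def P1_def \<iota>'_def by auto
  obtain c2' where st2: "cstep N P0 c2 K1 e0 a P1 c2'" and cb': "ccbisimilar N P1 (rename d \<iota>') c2'"
    using cb_step[OF cb st1] by blast
  note T2 = step_transport[OF iso wP wQ pm2 st2 e]
  have KK: "rename_set \<rho> K1 = K" unfolding K1_def rename_set_comp
  proof -
    have "rename_set (\<rho> \<circ> \<iota>) K = rename_set (\<lambda>x. x) K"
    proof (rule rename_set_cong)
      fix x b assume "(x,b) \<in> K"
      then have "(x,b) \<in> elems Q0" using KQ by (rule rev_subsetD)
      then have "x \<in> carrier Q0" by (rule elems_carrier)
      then show "(\<rho> \<circ> \<iota>) x = x" unfolding \<iota>_def comp_def by (rule isoc_inv_id2[OF iso])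
    qed
    then show "rename_set (\<rho> \<circ> \<iota>) K = K" by (simp add: rename_set_id)
  qed
  define \<rho>' where "\<rho>' = \<rho>(e0:=e)"
  have cs2: "cstep N Q0 (rename c2 \<rho>) K e a Q1 (rename c2' \<rho>')" and iso2: "isoc P1 Q1 \<rho>'"
    and wQ1: "wf_poset Q1"
    using T2 unfolding KK \<rho>'_def Q1[symmetric] by auto
  have dd: "rename (rename d \<iota>') \<rho>' = d"
  proof (rule rename_back)
    fix x b assume "(x,b) \<in> causes d"
    then have "(x,b) \<in> elems Q1" using cd by (rule rev_subsetD)
    then have "x \<in> carrier Q1" by (rule elems_carrier)
    then have "x = e \<or> x \<in> carrier Q0" unfolding Q1 carrier_delta by blast
    then show "\<rho>' (\<iota>' x) = x"
    proof
      assume "x = e" then show ?thesis unfolding \<rho>'_def \<iota>'_def by simp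
    next
      assume xc: "x \<in> carrier Q0"
      then have "x \<noteq> e" using e by blast
      moreover have "\<iota> x \<in> carrier P0" using isoc_carrier[OF isoi xc] .
      then have "\<iota> x \<noteq> e0" using e0 by blast
      ultimately show ?thesis unfolding \<rho>'_def \<iota>'_def using isoc_inv_id2[OF iso xc] \<iota>_def by simp
    qed
  qed
  have "(d, rename c2' \<rho>') = (rename (rename d \<iota>') \<rho>', rename c2' \<rho>')" using dd by simp
  then have "(d, rename c2' \<rho>') \<in> Rt N Q1" unfolding Rt_def
    using wQ1 iso2 cb' by blast
  then show ?thesis using cs2 by blast
qed

lemma Rt_bisim:
  assumes inf: "infinite (UNIV :: 'e set)"
  shows "ccbisim N (Rt N :: ('e, 'a) poset \<Rightarrow> _)"
  unfolding ccbisim_def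
proof (intro conjI allI impI)
  fix P :: "('e, 'a) poset" and c1 c2 assume "(c1, c2) \<in> Rt N P"
  then obtain d1 d2 \<rho> P0 where h: "c1 = rename d1 \<rho>" "c2 = rename d2 \<rho>" "wf_poset P" "isoc P0 P \<rho>"
    "ccbisimilar N P0 d1 d2" unfolding Rt_def by blast
  have "pmarking N P0 d1" "pmarking N P0 d2" using cb_pm[OF h(5)] by auto
  then show "pmarking N P c1"
    using pmarking_transport[OF h(4) h(3)] h(1,2) by blast
next
  fix P :: "('e, 'a) poset" and c1 c2 assume "(c1, c2) \<in> Rt N P"
  then obtain d1 d2 \<rho> P0 where h: "c1 = rename d1 \<rho>" "c2 = rename d2 \<rho>" "wf_poset P" "isoc P0 P \<rho>"
    "ccbisimilar N P0 d1 d2" unfolding Rt_def by blast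
  have "pmarking N P0 d1" "pmarking N P0 d2" using cb_pm[OF h(5)] by auto
  then show "pmarking N P c2"
    using pmarking_transport[OF h(4) h(3)] h(1,2) by blast
next
  fix P :: "('e, 'a) poset" and c1 c2 K e a Q c1'
  assume h: "(c1, c2) \<in> Rt N P \<and> cstep N P c1 K e a Q c1'"
  then obtain d1 d2 \<rho> P0 where g: "c1 = rename d1 \<rho>" "c2 = rename d2 \<rho>" "wf_poset P" "isoc P0 P \<rho>"
    "ccbisimilar N P0 d1 d2" unfolding Rt_def by blast
  have "cstep N P (rename d1 \<rho>) K e a Q c1'" using h g(1) by blast
  from main_step[OF inf g(3) g(4) g(5) this]
  show "\<exists>c2'. cstep N P c2 K e a Q c2' \<and> (c1', c2') \<in> Rt N Q" using g(2) by blast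
next
  fix P :: "('e, 'a) poset" and c1 c2 K e a Q c2'
  assume h: "(c1, c2) \<in> Rt N P \<and> cstep N P c2 K e a Q c2'"
  then obtain d1 d2 \<rho> P0 where g: "c1 = rename d1 \<rho>" "c2 = rename d2 \<rho>" "wf_poset P" "isoc P0 P \<rho>"
    "ccbisimilar N P0 d1 d2" unfolding Rt_def by blast
  have cb2: "ccbisimilar N P0 d2 d1" by (rule cb_sym[OF g(5)])
  have "cstep N P (rename d2 \<rho>) K e a Q c2'" using h g(2) by blast
  from main_step[OF inf g(3) g(4) cb2 this]
  obtain c1' where "cstep N P (rename d1 \<rho>) K e a Q c1'" "(c2', c1') \<in> Rt N Q" by blast
  then show "\<exists>c1'. cstep N P c1 K e a Q c1' \<and> (c1', c2') \<in> Rt N Q" using Rt_sym g(1) by blast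
qed


theorem lemma6:
  fixes N :: "('s, 't, 'a) net"
    and P Q :: "('e, 'a) poset"
    and \<sigma> :: "'e \<Rightarrow> 'e"
    and c1 c2 :: "('e, 'a, 's) cmarking"
  assumes "infinite (UNIV :: 'e set)"
    and "wf_net N"
    and "wf_poset P" and "wf_poset Q"
    and "iso P Q \<sigma>"
    and "pmarking N P c1" and "pmarking N P c2"
    and "ccbisimilar N P c1 c2"
  shows "ccbisimilar N Q (rename c1 \<sigma>) (rename c2 \<sigma>)"
proof -
  have i: "isoc P Q \<sigma>" by (rule iso_isoc[OF assms(3) assms(4) assms(5)])
  have r: "(rename c1 \<sigma>, rename c2 \<sigma>) \<in> Rt N Q" by (rule Rt_intro[OF assms(4) i assms(8)])
  show ?thesis unfolding ccbisimilar_def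
    by (rule exI[of _ "Rt N"], rule conjI[OF Rt_bisim[OF assms(1)] r])
qed

end
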